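(* Let $G$ be a graph with $m$ vertices. Then the modular sumset number of $G$ is $\sigma(G)=1+\lfloor \log_2 m\rfloor$.
   Context: Graphs are simple and finite, without isolated vertices. For a positive integer $n$, $\mathbb{Z}_n$ denotes the set of non-negative integers modulo $n$ and $\mathscr{P}(\mathbb{Z}_n)$ its power set; for $A,B\subseteq\mathbb{Z}_n$, $A+B=\{x\in\mathbb{Z}_n: x\equiv a+b \pmod n,\ a\in A,\ b\in B\}$. A modular sumset labeling of $G$ is an injective function $f:V(G)\to\mathscr{P}(\mathbb{Z}_n)$ assigning non-empty subsets of $\mathbb{Z}_n$ to the vertices, with induced edge function $f^+(uv)=f(u)+f(v)$. The modular sumset number $\sigma(G)$ is the smallest positive integer $n$ such that $G$ admits a modular sumset labeling $f:V(G)\to\mathscr{P}(\mathbb{Z}_n)$. *)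

theory Defs
  imports Complex_Main
begin

definition simple_graph :: "'a set \<Rightarrow> 'a set set \<Rightarrow> bool" where
  "simple_graph V E \<longleftrightarrow> finite V \<and>
     (\<forall>e\<in>E. \<exists>u v. e = {u, v} \<and> u \<noteq> v \<and> u \<in> V \<and> v \<in> V) \<and>
     (\<forall>v\<in>V. \<exists>e\<in>E. v \<in> e)"

text \<open>Sumset in Z_n, with Z_n represented as {0..<n}.\<close>
definition mod_sumset :: "nat \<Rightarrow> nat set \<Rightarrow> nat set \<Rightarrow> nat set" where
  "mod_sumset n A B = {x. x < n \<and> (\<exists>a\<in>A. \<exists>b\<in>B. x = (a + b) mod n)}"

definition induced_edge_label :: "nat \<Rightarrow> ('a \<Rightarrow> nat set) \<Rightarrow> 'a set \<Rightarrow> nat set" where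
  "induced_edge_label n f e = (THE S. \<exists>u v. e = {u, v} \<and> S = mod_sumset n (f u) (f v))"

definition modular_sumset_labeling :: "'a set \<Rightarrow> 'a set set \<Rightarrow> nat \<Rightarrow> ('a \<Rightarrow> nat set) \<Rightarrow> bool" where
  "modular_sumset_labeling V E n f \<longleftrightarrow>
     inj_on f V \<and> (\<forall>v\<in>V. f v \<noteq> {} \<and> f v \<subseteq> {0..<n})"

definition modular_sumset_number :: "'a set \<Rightarrow> 'a set set \<Rightarrow> nat" where
  "modular_sumset_number V E = (LEAST n. n > 0 \<and> (\<exists>f. modular_sumset_labeling V E n f))"

end

theory Submission
  imports Defs
begin

lemma lab_iff:
  assumes "finite V"
  shows "(\<exists>f. modular_sumset_labeling V E n f) \<longleftrightarrow> card V < 2 ^ n"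
proof -
  let ?B = "Pow {0..<n} - {{}}"
  have fB: "finite ?B" by simp
  have cB: "card ?B = 2 ^ n - 1"
    by (simp add: card_Diff_singleton card_Pow)
  have pos: "(0::nat) < 2 ^ n" by simp
  show ?thesis
  proof
    assume "\<exists>f. modular_sumset_labeling V E n f"
    then obtain f where f: "inj_on f V" "\<forall>v\<in>V. f v \<noteq> {} \<and> f v \<subseteq> {0..<n}"
      unfolding modular_sumset_labeling_def by blast
    have "f ` V \<subseteq> ?B" using f(2) by auto
    hence "card (f ` V) \<le> card ?B" using card_mono[OF fB] by blast
    moreover have "card (f ` V) = card V" using card_image[OF f(1)] .
    ultimately show "card V < 2 ^ n" using cB pos by linarith
  next
    assume "card V < 2 ^ n"
    hence "card V \<le> card ?B" using cB by linarith
    from card_le_inj[OF assms fB this] obtain f where "f ` V \<subseteq> ?B" "inj_on f V" by blast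
    thus "\<exists>f. modular_sumset_labeling V E n f"
      unfolding modular_sumset_labeling_def by auto
  qed
qed

theorem mainTheorem2:
  fixes V :: "'a set" and E :: "'a set set" and m :: nat
  assumes "simple_graph V E" and "V \<noteq> {}" and "card V = m"
  shows "int (modular_sumset_number V E) = 1 + \<lfloor>log 2 (real m)\<rfloor>"
proof -
  have fin: "finite V" using assms(1) unfolding simple_graph_def by blast
  have m1: "m \<ge> 1" proof - have "card V > 0" using assms(2) fin card_gt_0_iff by blast thus ?thesis using assms(3) by simp qed
  obtain k where k: "2 ^ k \<le> m" "m < 2 ^ (k+1)" using ex_power_ivl1[of 2 m] m1 by auto
  have fl: "\<lfloor>log 2 (real m)\<rfloor> = int k"
    using floor_log_nat_eq_if[of 2 k m] k by simp
  have "modular_sumset_number V E = k + 1"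
    unfolding modular_sumset_number_def lab_iff[OF fin] assms(3)
  proof (rule Least_equality)
    show "0 < k + 1 \<and> m < 2 ^ (k + 1)" using k by simp
  next
    fix y assume "0 < y \<and> m < 2 ^ y"
    hence "(2::nat) ^ k < 2 ^ y" using k by linarith
    hence "k < y" by simp
    thus "k + 1 \<le> y" by simp
  qed
  thus ?thesis using fl by simp
qed

end
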